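(* Let $m,r$ be positive integers, let $W\in\mathbb{R}^{m\times m}$ be a fixed real symmetric matrix, $\lambda\ge 0$, $L\ge 1$, and $0<\eta\le 1/L$. Let $F(W,U):=\frac{1}{2}\|W-UU^{T}\|_{F}^{2}$ for $U\in\mathbb{R}^{m\times r}$, so that $\nabla_{U}F(W,U)=2(UU^{T}-W)U$, and let \[ \psi(U):= \frac{3}{2}\|U\|_{F}^{4}+\|W\|_{F}\|U\|_{F}^{2},\qquad \nabla\psi(U)=6\|U\|_F^2U+2\|W\|_F U. \] Given $\bar{U}\in\mathbb{R}^{m\times r}$, let \[ U^{+}=\mathrm{arg\,min}_{U\in\mathbb{R}^{m\times r}}\ \frac{\lambda}{2}\|U\|_{F}^{2} +\langle \nabla_{U}F(W,\bar{U}),U-\bar{U}\rangle +\frac{1}{\eta} D_{\psi}(U,\bar{U}). \] Set $G:=\nabla\psi(\bar{U})-\eta\nabla_{U}F(W,\bar{U})$. Then \[ U^{+}=\frac{1}{t}\,G, \] where $t\ge 0$ satisfies $t^{3}-(\lambda\eta+2\|W\|_{F})t^{2}-6\|G\|_{F}^{2}=0$.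
   Context: $\|\cdot\|_F$ is the Frobenius norm and $\langle Y_1,Y_2\rangle:=\mathrm{tr}(Y_1^{T}Y_2)$. The Bregman distance of $\psi$ is $D_{\psi}(X,Y):=\psi(X)-\psi(Y)-\langle\nabla\psi(Y),X-Y\rangle$. In the paper, $W=W^{k+1}$ and $\bar{U}=\bar{U}^{k}$ are current iterates of an alternating algorithm, $U^{+}=U^{k+1}$, $G=G^{k}$, and $t=t_k$. *)

theory Defs
  imports "HOL-Analysis.Analysis"
begin

definition frob_norm :: "real^'n^'m \<Rightarrow> real" where
  "frob_norm A = sqrt (\<Sum>i\<in>UNIV. \<Sum>j\<in>UNIV. (A $ i $ j)^2)"

definition frob_inner :: "real^'n^'m \<Rightarrow> real^'n^'m \<Rightarrow> real" where
  "frob_inner Y1 Y2 = trace (transpose Y1 ** Y2)"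

definition bregman :: "(real^'n^'m \<Rightarrow> real) \<Rightarrow> (real^'n^'m \<Rightarrow> real^'n^'m) \<Rightarrow> real^'n^'m \<Rightarrow> real^'n^'m \<Rightarrow> real" where
  "bregman psi gpsi X Y = psi X - psi Y - frob_inner (gpsi Y) (X - Y)"

definition Fobj :: "real^'m^'m \<Rightarrow> real^'r^'m \<Rightarrow> real" where
  "Fobj W U = (1/2) * (frob_norm (W - U ** transpose U))^2"

definition gradF :: "real^'m^'m \<Rightarrow> real^'r^'m \<Rightarrow> real^'r^'m" where
  "gradF W U = 2 *\<^sub>R ((U ** transpose U - W) ** U)"

definition psi :: "real^'m^'m \<Rightarrow> real^'r^'m \<Rightarrow> real" where
  "psi W U = (3/2) * (frob_norm U)^4 + frob_norm W * (frob_norm U)^2"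

definition grad_psi :: "real^'m^'m \<Rightarrow> real^'r^'m \<Rightarrow> real^'r^'m" where
  "grad_psi W U = (6 * (frob_norm U)^2) *\<^sub>R U + (2 * frob_norm W) *\<^sub>R U"

definition subprob :: "real \<Rightarrow> real \<Rightarrow> real^'m^'m \<Rightarrow> real^'r^'m \<Rightarrow> real^'r^'m \<Rightarrow> real" where
  "subprob lam eta W Ubar U =
     (lam/2) * (frob_norm U)^2 + frob_inner (gradF W Ubar) (U - Ubar)
     + (1/eta) * bregman (psi W) (grad_psi W) U Ubar"

end

theory Submission
  imports Defs
begin

lemma frob_norm_eq: "frob_norm (A::real^'n^'m) = norm A"
  unfolding frob_norm_def norm_eq_sqrt_inner inner_vec_def
  by (simp add: power2_eq_square)

lemma frob_inner_eq: "frob_inner (A::real^'n^'m) B = inner A B"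
proof -
  have "frob_inner A B = (\<Sum>i\<in>UNIV. \<Sum>k\<in>UNIV. A$k$i * B$k$i)"
    unfolding frob_inner_def trace_def matrix_matrix_mult_def transpose_def by simp
  also have "\<dots> = (\<Sum>k\<in>UNIV. \<Sum>i\<in>UNIV. A$k$i * B$k$i)" by (rule sum.swap)
  also have "\<dots> = inner A B" by (simp add: inner_vec_def)
  finally show ?thesis .
qed

lemma alg: "(3/2)*x^4 + (c/2)*x^2 - (6*y^2+c)*i - ((3/2)*y^4 + (c/2)*y^2 - (6*y^2+c)*y^2)
     = (3/2)*(x^2 - y^2)^2 + (3*y^2 + c/2)*(x^2 - 2*i + y^2)" for x y i c :: real
  by (simp add: eval_nat_numeral algebra_simps)

lemma key:
  fixes G U V :: "'a::real_inner"
  assumes "G = t *\<^sub>R V" "t = 6*(norm V)^2 + c"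
  shows "(3/2)*norm U^4 + (c/2)*norm U^2 - inner G U - ((3/2)*norm V^4 + (c/2)*norm V^2 - inner G V)
     = (3/2)*(norm U^2 - norm V^2)^2 + (3*norm V^2 + c/2)*norm(U-V)^2"
proof -
  have d: "norm(U-V)^2 = norm U^2 - 2 * inner U V + norm V^2"
    by (simp add: power2_norm_eq_inner inner_diff_left inner_diff_right inner_commute)
  have g1: "inner G U = t * inner U V" using assms(1) by (simp add: inner_commute)
  have g2: "inner G V = t * norm V^2" using assms(1) by (simp add: power2_norm_eq_inner)
  show ?thesis unfolding d g1 g2 assms(2) by (rule alg)
qed

theorem proposition2:
  fixes W :: "real^'m^'m" and Ubar Uplus :: "real^'r^'m"
    and lam L eta :: real
  assumes symW: "transpose W = W"
    and lam: "lam \<ge> 0" and L: "L \<ge> 1"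
    and eta_pos: "0 < eta" and eta_le: "eta \<le> 1 / L"
    and argmin: "\<forall>U :: real^'r^'m. subprob lam eta W Ubar Uplus \<le> subprob lam eta W Ubar U"
  shows "let G = grad_psi W Ubar - eta *\<^sub>R gradF W Ubar in
           (\<exists>t \<ge> 0. t^3 - (lam * eta + 2 * frob_norm W) * t^2 - 6 * (frob_norm G)^2 = 0) \<and>
           (\<forall>t \<ge> 0. t^3 - (lam * eta + 2 * frob_norm W) * t^2 - 6 * (frob_norm G)^2 = 0
                 \<longrightarrow> Uplus = (1 / t) *\<^sub>R G)"
proof -
  define G where "G = grad_psi W Ubar - eta *\<^sub>R gradF W Ubar"
  define c where "c = lam * eta + 2 * norm W"
  have c0: "c \<ge> 0" unfolding c_def using lam eta_pos by simp
  define phi where "phi U = (3/2)*norm U^4 + (c/2)*norm U^2 - inner G U" for U :: "real^'r^'m"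
  define K where "K = - eta * inner (gradF W Ubar) Ubar - psi W Ubar + inner (grad_psi W Ubar) Ubar"
  have lin: "eta * subprob lam eta W Ubar U = phi U + K" for U
    unfolding subprob_def bregman_def phi_def K_def G_def c_def frob_inner_eq
    apply (simp add: psi_def frob_norm_eq inner_diff_left inner_diff_right)
    using eta_pos by (simp add: field_simps)
  have phimin: "phi Uplus \<le> phi U" for U
  proof -
    have "eta * subprob lam eta W Ubar Uplus \<le> eta * subprob lam eta W Ubar U"
      using argmin eta_pos by simp
    thus ?thesis using lin by simp
  qed
  define p where "p t = t^3 - c * t^2 - 6 * (norm G)^2" for t
  have ex: "\<exists>t \<ge> 0. p t = 0"
  proof -
    define T where "T = c + 6 * norm G^2 + 1"
    have T1: "T \<ge> 1" unfolding T_def using c0 by simp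
    have "p T = T^2 * (T - c) - 6 * norm G^2" unfolding p_def by (simp add: power2_eq_square power3_eq_cube algebra_simps)
    also have T2: "T^2 \<ge> 1" using T1 by (simp add: one_le_power)
    have TC: "T - c \<ge> 0" unfolding T_def by simp
    have "T^2 * (T - c) \<ge> 1 * (T - c)" by (rule mult_right_mono[OF T2 TC])
    hence "T^2 * (T - c) - 6 * norm G^2 \<ge> 0" unfolding T_def by simp
    finally have pT: "p T \<ge> 0" .
    have p0: "p 0 \<le> 0" unfolding p_def by simp
    have "\<exists>x\<ge>0. x \<le> T \<and> p x = 0"
      by (rule IVT[of p 0 0 T, OF p0 pT]) (use T1 in \<open>auto simp: p_def[abs_def] intro!: continuous_intros\<close>)
    thus ?thesis by auto
  qed
  have uniq: "Uplus = (1/t) *\<^sub>R G" if t0: "t \<ge> 0" and pt: "p t = 0" for t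
  proof (cases "G = 0")
    case True
    have "phi Uplus \<le> phi 0" by (rule phimin)
    hence "(3/2)*norm Uplus^4 + (c/2)*norm Uplus^2 \<le> 0" unfolding phi_def True by simp
    moreover have "(c/2)*norm Uplus^2 \<ge> 0" using c0 by simp
    moreover have "norm Uplus^4 \<ge> 0" by simp
    ultimately have "norm Uplus^4 = 0" by linarith
    hence "Uplus = 0" by simp
    thus ?thesis using True by simp
  next
    case False
    have tpos: "t > 0"
    proof (rule ccontr)
      assume "\<not> t > 0" hence "t = 0" using t0 by simp
      thus False using pt False unfolding p_def by simp
    qed
    define V where "V = (1/t) *\<^sub>R G"
    have GV: "G = t *\<^sub>R V" unfolding V_def using tpos by simp
    have nV: "norm V^2 = norm G^2 / t^2" unfolding V_def using tpos
      by (simp add: power_divide)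
    have tc: "t = 6 * norm V^2 + c"
    proof -
      have "t^3 - c * t^2 = 6 * norm G^2" using pt unfolding p_def by simp
      hence "t^2 * (t - c) = 6 * norm G^2" by (simp add: power2_eq_square power3_eq_cube algebra_simps)
      hence "t - c = 6 * norm G^2 / t^2" using tpos by (simp add: field_simps)
      thus ?thesis unfolding nV by simp
    qed
    have "phi Uplus - phi V = (3/2)*(norm Uplus^2 - norm V^2)^2 + (3*norm V^2 + c/2)*norm(Uplus-V)^2"
      unfolding phi_def by (rule key[OF GV tc])
    moreover have "phi Uplus - phi V \<le> 0" using phimin[of V] by simp
    moreover have "(3/2)*(norm Uplus^2 - norm V^2)^2 \<ge> 0" by simp
    ultimately have "(3*norm V^2 + c/2)*norm(Uplus-V)^2 \<le> 0" by linarith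
    moreover have "3*norm V^2 + c/2 > 0" using False c0 tpos unfolding nV by (simp add: add_pos_nonneg)
    ultimately have "norm(Uplus-V)^2 \<le> 0" by (simp add: mult_le_0_iff)
    hence "Uplus = V" by simp
    thus ?thesis unfolding V_def .
  qed
  have pe: "p t = t^3 - (lam * eta + 2 * frob_norm W) * t^2 - 6 * (frob_norm G)^2" for t
    unfolding p_def c_def frob_norm_eq ..
  have "(\<exists>t \<ge> 0. t^3 - (lam * eta + 2 * frob_norm W) * t^2 - 6 * (frob_norm G)^2 = 0) \<and>
           (\<forall>t \<ge> 0. t^3 - (lam * eta + 2 * frob_norm W) * t^2 - 6 * (frob_norm G)^2 = 0
                 \<longrightarrow> Uplus = (1 / t) *\<^sub>R G)"
    unfolding pe[symmetric] using ex uniq by blast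
  thus ?thesis unfolding Let_def G_def[symmetric] .
qed

end
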